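(* Let $\mathcal H$ be a complex Hilbert space and $T\in\mathcal B(\mathcal H)$ positive. Then for all $x,y\in\mathcal H$ and all $t\in[0,1]$: if $\|Tx\|\,\|Ty\|\neq0$, $$|\langle Tx,y\rangle|\le\left(\|T^tx\|-\frac{\inf_{\lambda\in\mathbb C}\|T^tx-\lambda T^{1-t}y\|^2}{2\|T^tx\|}\right)\|T^{1-t}y\|,$$ and if $\|Tx\|\,\|Ty\|=0$, $|\langle Tx,y\rangle|\le\|T^tx\|\,\|T^{1-t}y\|$. In particular, for $t=\frac12$: if $\|Tx\|\,\|Ty\|\ne0$, $$|\langle Tx,y\rangle|\le\left(\|T^{1/2}x\|-\frac{\inf_{\lambda\in\mathbb C}\|T^{1/2}(x-\lambda y)\|^2}{2\|T^{1/2}x\|}\right)\|T^{1/2}y\|,$$ and if $\|Tx\|\,\|Ty\|=0$, $|\langle Tx,y\rangle|\le\|T^{1/2}x\|\,\|T^{1/2}y\|$.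
   Context: Powers $T^s$ of a positive operator are defined by functional calculus, with $T^0=I$. *)

theory Defs
  imports "HOL-Analysis.Analysis" "HOL-Computational_Algebra.Polynomial"
begin

class complex_inner = real_normed_vector +
  fixes scaleC :: "complex \<Rightarrow> 'a \<Rightarrow> 'a"
    and cinner :: "'a \<Rightarrow> 'a \<Rightarrow> complex"
  assumes scaleC_add_right: "scaleC a (x + y) = scaleC a x + scaleC a y"
    and scaleC_add_left: "scaleC (a + b) x = scaleC a x + scaleC b x"
    and scaleC_scaleC: "scaleC a (scaleC b x) = scaleC (a * b) x"
    and scaleC_one: "scaleC 1 x = x"
    and scaleR_scaleC: "scaleR r x = scaleC (complex_of_real r) x"
    and cinner_commute: "cinner x y = cnj (cinner y x)"
    and cinner_add_left: "cinner (x + y) z = cinner x z + cinner y z"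
    and cinner_scaleC_left: "cinner (scaleC a x) y = cnj a * cinner x y"
    and cinner_self_ge_zero: "0 \<le> Re (cinner x x)"
    and cinner_self_eq_zero: "cinner x x = 0 \<longleftrightarrow> x = 0"
    and norm_eq_sqrt_cinner: "norm x = sqrt (Re (cinner x x))"

class chilbert = complex_inner + banach

definition bounded_clinear :: "('a::complex_inner \<Rightarrow> 'b::complex_inner) \<Rightarrow> bool" where
  "bounded_clinear T \<longleftrightarrow> bounded_linear T \<and> (\<forall>c x. T (scaleC c x) = scaleC c (T x))"

definition positive_op :: "('a::chilbert \<Rightarrow> 'a) \<Rightarrow> bool" where
  "positive_op T \<longleftrightarrow> bounded_clinear T \<and>
     (\<forall>x. Im (cinner x (T x)) = 0 \<and> 0 \<le> Re (cinner x (T x)))"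

definition poly_op :: "real poly \<Rightarrow> ('a::chilbert \<Rightarrow> 'a) \<Rightarrow> 'a \<Rightarrow> 'a" where
  "poly_op p T x = (\<Sum>i\<le>degree p. coeff p i *\<^sub>R (T ^^ i) x)"

text \<open>Continuous functional calculus for a positive operator T: f(T) is the
operator-norm limit of p_n(T) for any sequence of real polynomials p_n converging
uniformly to f on [0, ||T||] (which contains the spectrum of T).\<close>
definition fcalc :: "('a::chilbert \<Rightarrow> 'a) \<Rightarrow> (real \<Rightarrow> real) \<Rightarrow> 'a \<Rightarrow> 'a" where
  "fcalc T f = (THE S. bounded_clinear S \<and>
     (\<forall>p :: nat \<Rightarrow> real poly.
        (\<forall>e>0. \<forall>\<^sub>F n in sequentially. \<forall>u\<in>{0..onorm T}. \<bar>poly (p n) u - f u\<bar> < e)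
        \<longrightarrow> ((\<lambda>n. onorm (\<lambda>x. poly_op (p n) T x - S x)) \<longlonglongrightarrow> 0)))"

definition op_pow :: "('a::chilbert \<Rightarrow> 'a) \<Rightarrow> real \<Rightarrow> 'a \<Rightarrow> 'a" where
  "op_pow T s = (if s = 0 then id else fcalc T (\<lambda>u. u powr s))"

end

theory Submission
  imports Defs "HOL-Computational_Algebra.Fundamental_Theorem_Algebra"
begin







lemma scaleC_zero_right[simp]: "scaleC a 0 = 0"
proof -
  have "scaleC a 0 + scaleC a 0 = scaleC a 0 + 0"
    by (simp only: scaleC_add_right[symmetric] add_0 add_0_right)
  then show ?thesis by (rule add_left_imp_eq)
qed

lemma scaleC_zero_left[simp]: "scaleC 0 x = 0"
proof -
  have "scaleC 0 x + scaleC 0 x = scaleC 0 x + 0"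
    by (simp only: scaleC_add_left[symmetric] add_0 add_0_right)
  then show ?thesis by (rule add_left_imp_eq)
qed

lemma scaleC_minus_right: "scaleC a (- x) = - scaleC a x"
proof -
  have "scaleC a (- x) + scaleC a x = 0"
    by (simp only: scaleC_add_right[symmetric] left_minus scaleC_zero_right)
  then show ?thesis by (simp add: eq_neg_iff_add_eq_0)
qed

lemma scaleC_diff_right: "scaleC a (x - y) = scaleC a x - scaleC a y"
  by (simp only: diff_conv_add_uminus scaleC_add_right scaleC_minus_right)

lemma scaleC_minus_left: "scaleC (- a) x = - scaleC a x"
proof -
  have "scaleC (- a) x + scaleC a x = 0"
    by (simp only: scaleC_add_left[symmetric] left_minus scaleC_zero_left)
  then show ?thesis by (simp add: eq_neg_iff_add_eq_0)
qed

lemma scaleC_diff_left: "scaleC (a - b) x = scaleC a x - scaleC b x"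
  by (simp only: diff_conv_add_uminus scaleC_add_left scaleC_minus_left)

lemma cinner_add_right: "cinner x (y + z) = cinner x y + cinner x z"
  by (subst (1 2 3) cinner_commute) (simp add: cinner_add_left)

lemma cinner_scaleC_right: "cinner x (scaleC a y) = a * cinner x y"
  by (subst (1 2) cinner_commute) (simp add: cinner_scaleC_left)

lemma cinner_zero_left[simp]: "cinner 0 x = 0"
proof -
  have "cinner 0 x + cinner 0 x = cinner 0 x + 0"
    by (simp only: cinner_add_left[symmetric] add_0 add_0_right)
  then show ?thesis by (rule add_left_imp_eq)
qed

lemma cinner_zero_right[simp]: "cinner x 0 = 0"
  by (subst cinner_commute) simp

lemma cinner_minus_left: "cinner (- x) y = - cinner x y"
proof -
  have "cinner (- x) y + cinner x y = 0"
    by (simp only: cinner_add_left[symmetric] left_minus cinner_zero_left)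
  then show ?thesis by (simp add: eq_neg_iff_add_eq_0)
qed

lemma cinner_minus_right: "cinner x (- y) = - cinner x y"
  by (subst (1 2) cinner_commute) (simp add: cinner_minus_left)

lemma cinner_diff_left: "cinner (x - y) z = cinner x z - cinner y z"
  by (simp only: diff_conv_add_uminus cinner_add_left cinner_minus_left)

lemma cinner_diff_right: "cinner x (y - z) = cinner x y - cinner x z"
  by (simp only: diff_conv_add_uminus cinner_add_right cinner_minus_right)

lemma cinner_sum_right: "cinner x (sum f A) = (\<Sum>a\<in>A. cinner x (f a))"
  by (induction A rule: infinite_finite_induct) (auto simp: cinner_add_right)

lemma cinner_scaleR_right: "cinner x (scaleR r y) = of_real r * cinner x y"
  by (simp add: scaleR_scaleC cinner_scaleC_right)

lemma cinner_scaleR_left: "cinner (scaleR r x) y = of_real r * cinner x y"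
  by (simp add: scaleR_scaleC cinner_scaleC_left)

lemma cinner_self_real: "cinner x x = of_real ((norm x)\<^sup>2)"
proof -
  have "Im (cinner x x) = 0" using cinner_commute[of x x]
    by (metis complex_cnj_cancel_iff complex.sel(2) cnj.sel(2) neg_equal_zero)
  moreover have "Re (cinner x x) = (norm x)\<^sup>2"
    using norm_eq_sqrt_cinner[of x] cinner_self_ge_zero[of x] by simp
  ultimately show ?thesis by (simp add: complex_eq_iff)
qed

lemma norm_diff_sq:
  "(norm (x - scaleC l y))\<^sup>2 = (norm x)\<^sup>2 - 2 * Re (l * cinner x y) + (cmod l)\<^sup>2 * (norm y)\<^sup>2"
proof -
  have "of_real ((norm (x - scaleC l y))\<^sup>2) = cinner (x - scaleC l y) (x - scaleC l y)"
    by (simp add: cinner_self_real)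
  also have "\<dots> = cinner x x - l * cinner x y - cnj l * cinner y x + cnj l * l * cinner y y"
    by (simp add: cinner_diff_left cinner_diff_right cinner_scaleC_left cinner_scaleC_right algebra_simps)
  finally have e: "of_real ((norm (x - scaleC l y))\<^sup>2) = cinner x x - l * cinner x y - cnj l * cinner y x + cnj l * l * cinner y y" .
  have "cnj l * cinner y x = cnj (l * cinner x y)" using cinner_commute[of y x] by simp
  moreover have "cnj l * l = of_real ((cmod l)\<^sup>2)" using complex_norm_square[of l] by (simp add: mult.commute)
  ultimately have "of_real ((norm (x - scaleC l y))\<^sup>2) = of_real ((norm x)\<^sup>2) - (l * cinner x y + cnj (l * cinner x y)) + of_real ((cmod l)\<^sup>2) * of_real ((norm y)\<^sup>2)"
    using e by (simp add: cinner_self_real)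
  also have "l * cinner x y + cnj (l * cinner x y) = of_real (2 * Re (l * cinner x y))"
    by (simp add: complex_eq_iff)
  finally have "of_real ((norm (x - scaleC l y))\<^sup>2) = (of_real ((norm x)\<^sup>2 - 2 * Re (l * cinner x y) + (cmod l)\<^sup>2 * (norm y)\<^sup>2) :: complex)"
    by simp
  then show ?thesis using of_real_eq_iff by blast
qed

lemma norm_diff_opt:
  assumes "y \<noteq> 0"
  shows "(norm (x - scaleC (cinner y x / cinner y y) y))\<^sup>2 = (norm x)\<^sup>2 - (cmod (cinner x y))\<^sup>2 / (norm y)\<^sup>2"
proof -
  have ny: "norm y \<noteq> 0" using assms by simp
  define l where "l = cinner y x / cinner y y"
  have l: "l = cnj (cinner x y) / of_real ((norm y)\<^sup>2)"
    unfolding l_def using cinner_commute[of y x] by (simp add: cinner_self_real)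
  have "l * cinner x y = of_real ((cmod (cinner x y))\<^sup>2 / (norm y)\<^sup>2)"
    unfolding l using complex_norm_square[of "cinner x y"] by (simp add: mult.commute)
  hence "Re (l * cinner x y) = (cmod (cinner x y))\<^sup>2 / (norm y)\<^sup>2" by simp
  moreover have "cmod l = cmod (cinner x y) / (norm y)\<^sup>2"
    unfolding l by (simp add: norm_divide norm_power)
  ultimately show ?thesis
    using norm_diff_sq[of x l y] ny unfolding l_def[symmetric]
    by (simp add: power_divide field_simps power2_eq_square)
qed

lemma cauchy_schwarz: "cmod (cinner x y) \<le> norm x * norm y"
proof (cases "y = 0")
  case True then show ?thesis by simp
next
  case False
  have "0 \<le> (norm x)\<^sup>2 - (cmod (cinner x y))\<^sup>2 / (norm y)\<^sup>2"
    using norm_diff_opt[OF False, of x] by (metis zero_le_power2)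
  hence "(cmod (cinner x y))\<^sup>2 \<le> (norm x * norm y)\<^sup>2"
    using False by (simp add: field_simps power_mult_distrib)
  then show ?thesis
    by (simp add: power_mono_iff)
qed




lemma main_ineq:
  fixes a b :: "'a::complex_inner"
  shows "cmod (cinner a b) \<le> (norm a - (INF l::complex. (norm (a - scaleC l b))\<^sup>2) / (2 * norm a)) * norm b"
proof (cases "a = 0")
  case True then show ?thesis by simp
next
  case a: False
  show ?thesis
  proof (cases "b = 0")
    case True then show ?thesis by simp
  next
    case b: False
    define c where "c = cmod (cinner a b)"
    define na where "na = norm a"
    define nb where "nb = norm b"
    define I where "I = (INF l::complex. (norm (a - scaleC l b))\<^sup>2)"
    define D where "D = na\<^sup>2 - c\<^sup>2 / nb\<^sup>2"
    have na: "na > 0" using a by (simp add: na_def)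
    have nb: "nb > 0" using b by (simp add: nb_def)
    have "I \<le> (norm (a - scaleC (cinner b a / cinner b b) b))\<^sup>2"
      unfolding I_def by (rule cINF_lower) (auto intro: bdd_belowI[where m=0])
    hence ID: "I \<le> D" using norm_diff_opt[OF b, of a] by (simp add: D_def c_def na_def nb_def)
    have "(na - D / (2 * na)) * nb \<le> (na - I / (2 * na)) * nb"
      using ID na nb by (intro mult_right_mono) (auto simp: divide_right_mono)
    moreover have "(na - D / (2 * na)) * nb = ((na * nb)\<^sup>2 + c\<^sup>2) / (2 * (na * nb))"
      using na nb by (simp add: D_def field_simps power2_eq_square)
    moreover have "c \<le> ((na * nb)\<^sup>2 + c\<^sup>2) / (2 * (na * nb))"
    proof -
      have "0 \<le> (na * nb - c)\<^sup>2" by simp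
      hence "c * (2 * (na * nb)) \<le> (na * nb)\<^sup>2 + c\<^sup>2" by (simp add: power2_eq_square algebra_simps)
      thus ?thesis using na nb by (simp add: pos_le_divide_eq)
    qed
    ultimately show ?thesis by (simp add: c_def na_def nb_def I_def)
  qed
qed

lemma norm_scaleC: "norm (scaleC c (x::'a::complex_inner)) = cmod c * norm x"
proof -
  have "(norm (scaleC c x))\<^sup>2 = (cmod c * norm x)\<^sup>2"
  proof -
    have "complex_of_real ((norm (scaleC c x))\<^sup>2) = cinner (scaleC c x) (scaleC c x)"
      by (simp add: cinner_self_real)
    also have "\<dots> = cnj c * c * cinner x x" by (simp add: cinner_scaleC_left cinner_scaleC_right)
    also have "\<dots> = complex_of_real ((cmod c * norm x)\<^sup>2)"
      using complex_norm_square[of c] by (simp add: cinner_self_real power_mult_distrib mult.commute)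
    finally show ?thesis using of_real_eq_iff by blast
  qed
  thus ?thesis by (simp add: power2_eq_iff_nonneg)
qed

lemma bounded_linear_scaleC: "bounded_linear (\<lambda>x::'a::complex_inner. scaleC c x)"
proof (rule bounded_linear_intro[where K="cmod c"])
  show "scaleC c (x + y) = scaleC c x + scaleC c y" for x y by (rule scaleC_add_right)
  show "scaleC c (r *\<^sub>R x) = r *\<^sub>R scaleC c x" for r x
    by (simp add: scaleR_scaleC scaleC_scaleC mult.commute)
  show "norm (scaleC c x) \<le> norm x * cmod c" for x by (simp add: norm_scaleC mult.commute)
qed

lemma tendsto_scaleC: "(f \<longlongrightarrow> (a::'a::complex_inner)) F \<Longrightarrow> ((\<lambda>n. scaleC c (f n)) \<longlongrightarrow> scaleC c a) F"
  by (rule bounded_linear.tendsto[OF bounded_linear_scaleC])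

lemma tendsto_cinner_left:
  fixes f :: "_ \<Rightarrow> 'a::complex_inner"
  assumes "(f \<longlongrightarrow> a) F"
  shows "((\<lambda>n. cinner (f n) y) \<longlongrightarrow> cinner a y) F"
proof -
  have "((\<lambda>n. norm (f n - a)) \<longlongrightarrow> 0) F"
    using tendsto_norm_zero[OF LIM_zero[OF assms]] .
  hence "((\<lambda>n. norm (f n - a) * norm y) \<longlongrightarrow> 0 * norm y) F"
    by (intro tendsto_intros)
  hence g0: "((\<lambda>n. norm (f n - a) * norm y) \<longlongrightarrow> 0) F" by simp
  have "((\<lambda>n. cinner (f n) y - cinner a y) \<longlongrightarrow> 0) F"
  proof (rule Lim_null_comparison[where g="\<lambda>n. norm (f n - a) * norm y"])
    have "norm (cinner (f n) y - cinner a y) \<le> norm (f n - a) * norm y" for n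
      using cauchy_schwarz[of "f n - a" y] by (simp only: cinner_diff_left)
    thus "\<forall>\<^sub>F n in F. norm (cinner (f n) y - cinner a y) \<le> norm (f n - a) * norm y" by simp
  qed (rule g0)
  thus ?thesis by (rule LIM_zero_cancel)
qed

lemma tendsto_cinner_right:
  fixes f :: "_ \<Rightarrow> 'a::complex_inner"
  assumes "(f \<longlongrightarrow> a) F"
  shows "((\<lambda>n. cinner y (f n)) \<longlongrightarrow> cinner y a) F"
proof -
  have "((\<lambda>n. cnj (cinner (f n) y)) \<longlongrightarrow> cnj (cinner a y)) F"
    by (intro tendsto_cnj tendsto_cinner_left assms)
  moreover have "\<And>u. cinner y u = cnj (cinner u y)" by (rule cinner_commute)
  ultimately show ?thesis by (simp only:)
qed




lemma scaleR_scaleC_comm: "r *\<^sub>R scaleC c (x::'a::complex_inner) = scaleC c (r *\<^sub>R x)"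
  by (simp add: scaleR_scaleC scaleC_scaleC mult.commute)

lemma bcl_bl: "bounded_clinear T \<Longrightarrow> bounded_linear T"
  by (simp add: bounded_clinear_def)

lemma bcl_scaleC: "bounded_clinear T \<Longrightarrow> T (scaleC c x) = scaleC c (T x)"
  by (simp add: bounded_clinear_def)

lemma bl_add: "bounded_linear T \<Longrightarrow> T (x + y) = T x + T y"
  by (rule linear_add[OF bounded_linear.linear])
lemma bl_zero: "bounded_linear T \<Longrightarrow> T 0 = 0"
  by (rule linear_0[OF bounded_linear.linear])
lemma bl_scaleR: "bounded_linear T \<Longrightarrow> T (r *\<^sub>R x) = r *\<^sub>R T x"
  by (rule linear_scale[OF bounded_linear.linear])
lemma bl_diff: "bounded_linear T \<Longrightarrow> T (x - y) = T x - T y"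
  by (rule linear_diff[OF bounded_linear.linear])
lemma bl_sum: "bounded_linear T \<Longrightarrow> T (sum f A) = (\<Sum>a\<in>A. T (f a))"
  by (rule linear_sum[OF bounded_linear.linear])

lemma poly_op_le:
  "degree p \<le> n \<Longrightarrow> poly_op p T x = (\<Sum>i\<le>n. coeff p i *\<^sub>R (T ^^ i) x)"
  unfolding poly_op_def by (rule sum.mono_neutral_left) (auto simp: coeff_eq_0)

lemma poly_op_pCons:
  assumes "bounded_linear T"
  shows "poly_op (pCons a p) T x = a *\<^sub>R x + T (poly_op p T x)"
proof -
  have d: "degree (pCons a p) \<le> Suc (degree p)" by (simp add: degree_pCons_le)
  have "poly_op (pCons a p) T x = (\<Sum>i\<le>Suc (degree p). coeff (pCons a p) i *\<^sub>R (T ^^ i) x)"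
    by (rule poly_op_le[OF d])
  also have "\<dots> = a *\<^sub>R x + (\<Sum>i\<le>degree p. coeff p i *\<^sub>R T ((T ^^ i) x))"
    unfolding sum.atMost_Suc_shift by simp
  also have "(\<Sum>i\<le>degree p. coeff p i *\<^sub>R T ((T ^^ i) x)) = T (poly_op p T x)"
    unfolding poly_op_def
    by (simp add: bl_sum[OF assms] bl_scaleR[OF assms])
  finally show ?thesis .
qed

lemma poly_op_0[simp]: "poly_op 0 T x = 0"
  by (simp add: poly_op_def)

lemma poly_op_add: "poly_op (p + q) T x = poly_op p T x + poly_op q T x"
proof -
  define n where "n = max (degree p) (degree q)"
  have "degree (p + q) \<le> n" "degree p \<le> n" "degree q \<le> n"
    by (auto simp: n_def intro: degree_add_le)
  thus ?thesis by (simp add: poly_op_le scaleR_add_left sum.distrib)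
qed

lemma poly_op_smult: "poly_op (smult c p) T x = c *\<^sub>R poly_op p T x"
proof -
  have "degree (smult c p) \<le> degree p" by (rule degree_smult_le)
  thus ?thesis by (simp add: poly_op_le[of _ "degree p"] scaleR_sum_right)
qed

lemma poly_op_minus: "poly_op (- p) T x = - poly_op p T x"
  using poly_op_smult[of "-1" p T x] by simp

lemma poly_op_diff: "poly_op (p - q) T x = poly_op p T x - poly_op q T x"
  using poly_op_add[of p "- q" T x] poly_op_minus[of q T x] by simp

lemma poly_op_const:
  assumes "bounded_linear T"
  shows "poly_op [:c:] T x = c *\<^sub>R x"
  using poly_op_pCons[OF assms, of c 0 x] bl_zero[OF assms] by simp

lemma poly_op_X:
  assumes "bounded_linear T"
  shows "poly_op [:0, 1:] T x = T x"
  using poly_op_pCons[OF assms, of 0 "[:1:]" x] poly_op_const[OF assms, of 1] by simp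

lemma poly_op_mult:
  assumes "bounded_linear T"
  shows "poly_op (p * q) T x = poly_op p T (poly_op q T x)"
proof (induction p arbitrary: x)
  case 0 then show ?case by simp
next
  case (pCons a p)
  have "poly_op (pCons a p * q) T x = a *\<^sub>R poly_op q T x + poly_op (pCons 0 (p * q)) T x"
    by (simp add: poly_op_add poly_op_smult)
  also have "poly_op (pCons 0 (p * q)) T x = T (poly_op p T (poly_op q T x))"
    using poly_op_pCons[OF assms, of 0 "p * q" x] pCons.IH by simp
  finally show ?case by (simp add: poly_op_pCons[OF assms])
qed

lemma poly_op_bl:
  assumes "bounded_linear T"
  shows "bounded_linear (poly_op p T)"
proof (induction p)
  case 0 then show ?case by (simp add: poly_op_def[abs_def])
next
  case (pCons a p)
  have "poly_op (pCons a p) T = (\<lambda>x. a *\<^sub>R x + T (poly_op p T x))"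
    by (rule ext) (rule poly_op_pCons[OF assms])
  moreover have "bounded_linear (\<lambda>x. a *\<^sub>R x + T (poly_op p T x))"
    by (intro bounded_linear_add bounded_linear_scaleR_right
          bounded_linear_compose[OF assms pCons.IH])
  ultimately show ?case by simp
qed

lemma poly_op_scaleC:
  assumes "bounded_clinear T"
  shows "poly_op p T (scaleC c x) = scaleC c (poly_op p T x)"
proof (induction p arbitrary: x)
  case 0 then show ?case by simp
next
  case (pCons a p)
  show ?case
    using assms by (simp add: poly_op_pCons bcl_bl pCons.IH bcl_scaleC scaleR_scaleC_comm scaleC_add_right)
qed

lemma poly_op_bcl:
  assumes "bounded_clinear T"
  shows "bounded_clinear (poly_op p T)"
  using poly_op_bl[OF bcl_bl[OF assms]] poly_op_scaleC[OF assms]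
  by (simp add: bounded_clinear_def)

lemma poly_op_comm:
  assumes "bounded_linear T"
  shows "poly_op p T (T x) = T (poly_op p T x)"
proof (induction p arbitrary: x)
  case 0 then show ?case by (simp add: bl_zero[OF assms])
next
  case (pCons a p)
  show ?case
    by (simp add: poly_op_pCons[OF assms] pCons.IH bl_add[OF assms]
          bl_scaleR[OF assms])
qed

definition selfadj :: "('a::complex_inner \<Rightarrow> 'a) \<Rightarrow> bool" where
  "selfadj T \<longleftrightarrow> (\<forall>x y. cinner (T x) y = cinner x (T y))"

lemma poly_op_selfadj:
  assumes "bounded_linear T" "selfadj T"
  shows "cinner (poly_op p T x) y = cinner x (poly_op p T y)"
proof (induction p arbitrary: x y)
  case 0 then show ?case by simp
next
  case (pCons a p)
  have "cinner (poly_op p T x) (T y) = cinner x (poly_op p T (T y))" by (rule pCons.IH)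
  also have "\<dots> = cinner x (T (poly_op p T y))" by (simp add: poly_op_comm[OF assms(1)])
  finally have e: "cinner (T (poly_op p T x)) y = cinner x (T (poly_op p T y))"
    using assms(2) by (simp add: selfadj_def)
  show ?case
    by (simp add: poly_op_pCons[OF assms(1)] cinner_add_left cinner_add_right
          cinner_scaleR_left cinner_scaleR_right e)
qed

lemma positive_selfadj:
  assumes "positive_op (T::'a::chilbert \<Rightarrow> 'a)"
  shows "selfadj T"
  unfolding selfadj_def
proof (intro allI)
  fix x y :: 'a
  have bl: "bounded_linear T" and sc: "\<And>c x. T (scaleC c x) = scaleC c (T x)"
    using assms by (auto simp: positive_op_def bounded_clinear_def)
  have im: "Im (cinner v (T v)) = 0" for v using assms by (simp add: positive_op_def)
  define A where "A = cinner x (T y)"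
  define B where "B = cinner y (T x)"
  have "cinner (x + y) (T (x + y)) = cinner x (T x) + cinner y (T y) + A + B"
    by (simp add: A_def B_def bl_add[OF bl] cinner_add_left cinner_add_right)
  hence 1: "Im (A + B) = 0" using im[of "x+y"] im[of x] im[of y] by simp
  have "cinner (x + scaleC \<i> y) (T (x + scaleC \<i> y)) = cinner x (T x) + cinner y (T y) + \<i> * A - \<i> * B"
    by (simp add: A_def B_def bl_add[OF bl] sc cinner_add_left cinner_add_right
        cinner_scaleC_left cinner_scaleC_right algebra_simps)
  hence 2: "Re (A - B) = 0" using im[of "x + scaleC \<i> y"] im[of x] im[of y] by simp
  have "A = cnj B" using 1 2 by (simp add: complex_eq_iff)
  thus "cinner (T x) y = cinner x (T y)"
    unfolding A_def B_def by (metis cinner_commute)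
qed




lemma poly_ext: "(\<And>u. poly p u = poly q (u::real)) \<Longrightarrow> p = q"
  using poly_eq_poly_eq_iff[of p q] by (simp add: fun_eq_iff)

inductive good :: "real \<Rightarrow> real poly \<Rightarrow> bool" for M where
  g_sq: "good M (s * s)"
| g_X: "good M (s * s * [:0, 1:])"
| g_MX: "good M (s * s * [:M, -1:])"
| g_add: "good M p \<Longrightarrow> good M q \<Longrightarrow> good M (p + q)"

lemma good_XMX:
  assumes "M > 0"
  shows "good M ([:0, 1:] * [:M, -1:])"
proof -
  define c where "c = sqrt (1 / M)"
  have "[:0, 1:] * [:M, -1:] =
        ([:c:] * [:M, -1:]) * ([:c:] * [:M, -1:]) * [:0, 1:] + ([:c:] * [:0, 1:]) * ([:c:] * [:0, 1:]) * [:M, -1:]"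
  proof (rule poly_ext)
    fix u :: real
    have cc: "c * c = 1 / M" using assms by (simp add: c_def)
    have "poly (([:c:] * [:M, -1:]) * ([:c:] * [:M, -1:]) * [:0, 1:] + ([:c:] * [:0, 1:]) * ([:c:] * [:0, 1:]) * [:M, -1:]) u
          = (c * c) * (u * (M - u) * M)"
      by (simp add: algebra_simps)
    also have "\<dots> = u * (M - u)" using cc assms by simp
    finally show "poly ([:0, 1:] * [:M, -1:]) u = poly (([:c:] * [:M, -1:]) * ([:c:] * [:M, -1:]) * [:0, 1:] + ([:c:] * [:0, 1:]) * ([:c:] * [:0, 1:]) * [:M, -1:]) u"
      by (simp add: algebra_simps)
  qed
  also have "good M \<dots>" by (intro g_add g_X g_MX)
  finally show ?thesis .
qed

lemma good_ssmult:
  assumes "good M g"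
  shows "good M (t * t * g)"
  using assms
proof induction
  case (g_sq s)
  have e: "t * t * (s * s) = (t * s) * (t * s)" by (simp add: algebra_simps)
  show ?case unfolding e by (rule good.g_sq)
next
  case (g_X s)
  have e: "t * t * (s * s * [:0, 1:]) = (t * s) * (t * s) * [:0, 1:]" by (simp add: algebra_simps)
  show ?case unfolding e by (rule good.g_X)
next
  case (g_MX s)
  have e: "t * t * (s * s * [:M, -1:]) = (t * s) * (t * s) * [:M, -1:]" by (simp add: algebra_simps)
  show ?case unfolding e by (rule good.g_MX)
next
  case (g_add p q)
  then show ?case by (simp add: distrib_left good.g_add)
qed

lemma good_one: "good M 1"
  using good.g_sq[of M 1] by simp

lemma good_X: "good M [:0, 1:]"
  using good.g_X[of M 1] by simp

lemma good_MX: "good M [:M, -1:]"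
  using good.g_MX[of M 1] by simp

lemma good_gen_mult:
  assumes "M > 0" "w \<in> {1, [:0, 1:], [:M, -1:]}" "w' \<in> {1, [:0, 1:], [:M, -1:]}"
  shows "good M (w * w')"
proof -
  have XX: "good M ([:0, 1:] * [:0, 1:])" by (rule good.g_sq)
  have MM: "good M ([:M, -1:] * [:M, -1:])" by (rule good.g_sq)
  have XM: "good M ([:0, 1:] * [:M, -1:])" by (rule good_XMX[OF assms(1)])
  hence MX: "good M ([:M, -1:] * [:0, 1:])" by (simp add: mult.commute)
  show ?thesis using assms(2,3) XX MM XM MX good_one good_X good_MX by auto
qed

lemma good_mult_gen:
  assumes "M > 0" "w \<in> {1, [:0, 1:], [:M, -1:]}" "good M q"
  shows "good M (s * s * w * q)"
  using assms(3)
proof induction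
  case (g_sq r)
  have e: "s * s * w * (r * r) = (s * r) * (s * r) * (w * 1)" by (simp add: algebra_simps)
  show ?case unfolding e by (rule good_ssmult, rule good_gen_mult[OF assms(1,2)]) simp
next
  case (g_X r)
  have e: "s * s * w * (r * r * [:0, 1:]) = (s * r) * (s * r) * (w * [:0, 1:])" by (simp add: algebra_simps)
  show ?case unfolding e by (rule good_ssmult, rule good_gen_mult[OF assms(1,2)]) simp
next
  case (g_MX r)
  have e: "s * s * w * (r * r * [:M, -1:]) = (s * r) * (s * r) * (w * [:M, -1:])" by (simp add: algebra_simps)
  show ?case unfolding e by (rule good_ssmult, rule good_gen_mult[OF assms(1,2)]) simp
next
  case (g_add p q)
  then show ?case by (simp add: distrib_left good.g_add)
qed

lemma good_mult:
  assumes "M > 0" "good M p" "good M q"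
  shows "good M (p * q)"
  using assms(2)
proof induction
  case (g_sq s)
  then show ?case using good_mult_gen[OF assms(1) _ assms(3), of 1 s] by simp
next
  case (g_X s)
  then show ?case using good_mult_gen[OF assms(1) _ assms(3), of "[:0, 1:]" s] by simp
next
  case (g_MX s)
  then show ?case using good_mult_gen[OF assms(1) _ assms(3), of "[:M, -1:]" s] by simp
next
  case (g_add p1 p2)
  then show ?case by (simp add: distrib_right good.g_add)
qed




lemma sws:
  assumes "bounded_linear T" "selfadj T"
  shows "cinner x (poly_op (s * s * w) T x) = cinner (poly_op s T x) (poly_op w T (poly_op s T x))"
proof -
  have e: "s * s * w = s * (w * s)" by (simp add: algebra_simps)
  have "poly_op (s * s * w) T x = poly_op s T (poly_op w T (poly_op s T x))"
    by (simp only: e poly_op_mult[OF assms(1)])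
  thus ?thesis by (simp add: poly_op_selfadj[OF assms, symmetric])
qed

lemma MX_pos:
  assumes "bounded_linear T" "onorm T \<le> M"
  shows "0 \<le> Re (cinner v (poly_op [:M, -1:] T v))"
proof -
  have "poly_op [:M, -1:] T v = M *\<^sub>R v + T ((-1) *\<^sub>R v)"
    using poly_op_pCons[OF assms(1), of M "[:-1:]" v] poly_op_const[OF assms(1), of "-1" v] by simp
  also have "\<dots> = M *\<^sub>R v - T v" using bl_scaleR[OF assms(1), of "-1" v] by simp
  finally have e: "poly_op [:M, -1:] T v = M *\<^sub>R v - T v" .
  have "Re (cinner v (T v)) \<le> cmod (cinner v (T v))" by (rule complex_Re_le_cmod)
  also have "\<dots> \<le> norm v * norm (T v)" by (rule cauchy_schwarz)
  also have "\<dots> \<le> norm v * (onorm T * norm v)"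
    by (intro mult_left_mono onorm[OF assms(1)]) simp
  also have "\<dots> \<le> norm v * (M * norm v)"
    by (intro mult_left_mono mult_right_mono assms(2)) auto
  finally have "Re (cinner v (T v)) \<le> M * (norm v)\<^sup>2" by (simp add: power2_eq_square algebra_simps)
  thus ?thesis
    by (simp add: e cinner_diff_right cinner_scaleR_right cinner_self_real)
qed

lemma good_pos:
  assumes pos: "positive_op T" and M: "onorm T \<le> M" and g: "good M q"
  shows "0 \<le> Re (cinner x (poly_op q T x))"
  using g
proof (induction arbitrary: x)
  have bl: "bounded_linear T" using pos by (simp add: positive_op_def bounded_clinear_def)
  have sa: "selfadj T" by (rule positive_selfadj[OF pos])
  {
    case (g_sq s)
    have "cinner x (poly_op (s * s * 1) T x) = cinner (poly_op s T x) (poly_op 1 T (poly_op s T x))"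
      by (rule sws[OF bl sa])
    also have "poly_op 1 T v = v" for v using poly_op_const[OF bl, of 1 v] by (simp add: one_pCons)
    finally show ?case by (simp add: cinner_self_real)
  next
    case (g_X s)
    have "cinner x (poly_op (s * s * [:0, 1:]) T x) = cinner (poly_op s T x) (poly_op [:0, 1:] T (poly_op s T x))"
      by (rule sws[OF bl sa])
    then show ?case using pos by (simp add: poly_op_X[OF bl] positive_op_def)
  next
    case (g_MX s)
    have "cinner x (poly_op (s * s * [:M, -1:]) T x) = cinner (poly_op s T x) (poly_op [:M, -1:] T (poly_op s T x))"
      by (rule sws[OF bl sa])
    then show ?case using MX_pos[OF bl M] by simp
  next
    case (g_add p q)
    then show ?case by (simp add: poly_op_add cinner_add_right)
  }
qed




definition ev :: "complex \<Rightarrow> real poly \<Rightarrow> complex" where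
  "ev w p = (\<Sum>i\<le>degree p. complex_of_real (coeff p i) * w ^ i)"

lemma ev_le: "degree p \<le> n \<Longrightarrow> ev w p = (\<Sum>i\<le>n. complex_of_real (coeff p i) * w ^ i)"
  unfolding ev_def by (rule sum.mono_neutral_left) (auto simp: coeff_eq_0)

lemma ev_add: "ev w (p + q) = ev w p + ev w q"
proof -
  define n where "n = max (degree p) (degree q)"
  have "degree (p + q) \<le> n" "degree p \<le> n" "degree q \<le> n"
    by (auto simp: n_def intro: degree_add_le)
  thus ?thesis by (simp add: ev_le distrib_right sum.distrib)
qed

lemma ev_smult: "ev w (smult c p) = complex_of_real c * ev w p"
proof -
  have "degree (smult c p) \<le> degree p" by (rule degree_smult_le)
  thus ?thesis by (simp add: ev_le[of _ "degree p"] sum_distrib_left mult.assoc)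
qed

lemma ev_pCons0: "ev w (pCons 0 r) = w * ev w r"
proof -
  have d: "degree (pCons 0 r) \<le> Suc (degree r)" by (simp add: degree_pCons_le)
  have "ev w (pCons 0 r) = (\<Sum>i\<le>Suc (degree r). complex_of_real (coeff (pCons 0 r) i) * w ^ i)"
    by (rule ev_le[OF d])
  also have "\<dots> = (\<Sum>i\<le>degree r. complex_of_real (coeff r i) * w ^ Suc i)"
    unfolding sum.atMost_Suc_shift by simp
  also have "\<dots> = w * ev w r" unfolding ev_def by (simp add: sum_distrib_left algebra_simps)
  finally show ?thesis .
qed

lemma ev_0[simp]: "ev w 0 = 0" by (simp add: ev_def)

lemma ev_mult: "ev w (p * q) = ev w p * ev w q"
proof (induction p)
  case 0 then show ?case by simp
next
  case (pCons a p)
  have "pCons a p = [:a:] + pCons 0 p" by simp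
  moreover have "ev w [:a:] = complex_of_real a" by (simp add: ev_def)
  ultimately have "ev w (pCons a p) = complex_of_real a + w * ev w p"
    by (metis ev_add ev_pCons0)
  then show ?case by (simp add: ev_add ev_smult ev_pCons0 pCons.IH algebra_simps)
qed

lemma ev_map: "ev w p = poly (map_poly complex_of_real p) w"
  by (simp add: ev_def poly_altdef degree_map_poly coeff_map_poly)

lemma ev_real: "ev (complex_of_real r) p = complex_of_real (poly p r)"
  by (simp add: ev_def poly_altdef)

lemma ev_lin_zero:
  assumes "degree rr \<le> 1" "ev z rr = 0" "Im z \<noteq> 0"
  shows "rr = 0"
proof -
  have "ev z rr = complex_of_real (coeff rr 0) + complex_of_real (coeff rr 1) * z"
    using ev_le[OF assms(1)] by simp
  hence e: "complex_of_real (coeff rr 0) + complex_of_real (coeff rr 1) * z = 0" using assms(2) by simp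
  from arg_cong[OF e, of Im] have "coeff rr 1 * Im z = 0" by simp
  hence c1: "coeff rr 1 = 0" using assms(3) by simp
  from arg_cong[OF e, of Re] c1 have c0: "coeff rr 0 = 0" by simp
  show ?thesis
  proof (rule poly_eqI)
    fix n
    show "coeff rr n = coeff 0 n"
      using c0 c1 assms(1) by (cases "n \<le> 1") (auto simp: coeff_eq_0 le_Suc_eq)
  qed
qed




lemma factor_good:
  assumes M: "M > 0"
  shows "(\<forall>u\<in>{0..M}. poly q u > 0) \<Longrightarrow> good M q"
proof (induction "degree q" arbitrary: q rule: less_induct)
  case less
  have "poly q 0 > 0" using less.prems M by simp
  hence q0: "q \<noteq> 0" by auto
  show ?case
  proof (cases "degree q = 0")
    case True
    define c where "c = coeff q 0"
    have qc: "q = [:c:]" using degree_0_id[OF True] by (simp add: c_def)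
    have "c > 0" using less.prems M qc by auto
    hence "q = [:sqrt c:] * [:sqrt c:]" using qc by simp
    then show ?thesis using good.g_sq by metis
  next
    case False
    have "\<not> constant (poly (map_poly complex_of_real q))"
      using False by (simp add: constant_degree degree_map_poly)
    then obtain z where "poly (map_poly complex_of_real q) z = 0"
      using fundamental_theorem_of_algebra by blast
    hence zq: "ev z q = 0" by (simp add: ev_map)
    show ?thesis
    proof (cases "Im z = 0")
      case True
      define r where "r = Re z"
      have "z = complex_of_real r" using True by (simp add: r_def complex_eq_iff)
      hence "poly q r = 0" using zq by (simp add: ev_real)
      then obtain d where qd: "q = [:-r, 1:] * d" using poly_eq_0_iff_dvd by (metis dvdE)
      have d0: "d \<noteq> 0" using q0 qd by auto
      have "degree q = degree [:-r, 1:] + degree d" unfolding qd by (rule degree_mult_eq) (simp_all add: d0)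
      hence degd: "degree d < degree q" by simp
      have rM: "r \<notin> {0..M}" using less.prems \<open>poly q r = 0\<close> by (metis less_irrefl)
      have pq: "poly q u = (u - r) * poly d u" for u by (simp only: qd poly_mult) simp
      show ?thesis
      proof (cases "r < 0")
        case True
        have "\<forall>u\<in>{0..M}. poly d u > 0"
        proof
          fix u assume u: "u \<in> {0..M}"
          have "0 < (u - r) * poly d u" using less.prems u pq by auto
          moreover have "u - r > 0" using u True by auto
          ultimately show "poly d u > 0" by (simp add: zero_less_mult_iff)
        qed
        hence gd: "good M d" using less.hyps degd by blast
        have "[:-r, 1:] = [:sqrt (-r):] * [:sqrt (-r):] + 1 * 1 * [:0, 1:]"
          using True by (intro poly_ext) simp
        hence "good M [:-r, 1:]" by (metis good.g_add good.g_sq good.g_X)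
        then show ?thesis unfolding qd by (rule good_mult[OF M _ gd])
      next
        case False
        hence rM': "r > M" using rM by auto
        have "\<forall>u\<in>{0..M}. poly (- d) u > 0"
        proof
          fix u assume u: "u \<in> {0..M}"
          have "0 < (u - r) * poly d u" using less.prems u pq by auto
          moreover have "u - r < 0" using u rM' by auto
          ultimately show "poly (- d) u > 0" by (simp add: zero_less_mult_iff)
        qed
        hence gd: "good M (- d)" using less.hyps degd by (metis degree_minus)
        have "[:r, -1:] = [:sqrt (r - M):] * [:sqrt (r - M):] + 1 * 1 * [:M, -1:]"
          using rM' by (intro poly_ext) simp
        hence "good M [:r, -1:]" by (metis good.g_add good.g_sq good.g_MX)
        moreover have "q = [:r, -1:] * (- d)" using qd by simp
        ultimately show ?thesis by (metis good_mult[OF M _ gd])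
      qed
    next
      case False
      define a where "a = Re z"
      define b where "b = Im z"
      define Q where "Q = [:a\<^sup>2 + b\<^sup>2, -2 * a, 1:]"
      have Q0: "Q \<noteq> 0" by (simp add: Q_def)
      have degQ: "degree Q = 2" by (simp add: Q_def)
      have evQ: "ev z Q = 0"
      proof -
        have "ev z Q = complex_of_real (a\<^sup>2 + b\<^sup>2) + complex_of_real (-2 * a) * z + z\<^sup>2"
          unfolding ev_def degQ by (simp add: Q_def numeral_2_eq_2)
        also have "\<dots> = 0" by (simp add: complex_eq_iff a_def b_def power2_eq_square algebra_simps)
        finally show ?thesis .
      qed
      define d where "d = q div Q"
      define rr where "rr = q mod Q"
      have qdr: "q = Q * d + rr" using div_mult_mod_eq[of q Q] by (simp add: d_def rr_def mult.commute)
      have "ev z rr = 0" using zq evQ qdr by (metis ev_add ev_mult mult_zero_left add_0)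
      moreover have "degree rr \<le> 1"
        using degree_mod_less[OF Q0, of q] degQ by (auto simp: rr_def)
      ultimately have "rr = 0" using ev_lin_zero False b_def by blast
      hence qd: "q = Q * d" using qdr by simp
      have d0: "d \<noteq> 0" using q0 qd by auto
      have degd: "degree d < degree q" using qd d0 Q0 degQ by (simp add: degree_mult_eq)
      have pQ: "poly Q u = (u - a)\<^sup>2 + b\<^sup>2" for u by (simp add: Q_def power2_eq_square algebra_simps)
      have pQpos: "poly Q u > 0" for u using False unfolding pQ b_def
        by (simp add: add_nonneg_pos)
      have "\<forall>u\<in>{0..M}. poly d u > 0"
      proof
        fix u assume u: "u \<in> {0..M}"
        have "0 < poly Q u * poly d u" using less.prems u qd by (metis poly_mult)
        thus "poly d u > 0" using pQpos[of u] by (simp add: zero_less_mult_iff)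
      qed
      hence gd: "good M d" using less.hyps degd by blast
      have "Q = [:-a, 1:] * [:-a, 1:] + [:b:] * [:b:]"
        by (intro poly_ext) (simp add: Q_def power2_eq_square algebra_simps)
      hence "good M Q" by (metis good.g_add good.g_sq)
      then show ?thesis unfolding qd by (rule good_mult[OF M _ gd])
    qed
  qed
qed




lemma pos_bl: "positive_op T \<Longrightarrow> bounded_linear T"
  by (simp add: positive_op_def bounded_clinear_def)

lemma pos_bcl: "positive_op T \<Longrightarrow> bounded_clinear T"
  by (simp add: positive_op_def)

lemma poly_op_zeroT:
  assumes "\<And>v. T v = 0" "bounded_linear T"
  shows "poly_op p T x = poly p 0 *\<^sub>R x"
proof (induction p arbitrary: x)
  case 0 then show ?case by simp
next
  case (pCons a p)
  have "poly_op (pCons a p) T x = a *\<^sub>R x + T (poly_op p T x)" by (rule poly_op_pCons[OF assms(2)])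
  also have "T (poly_op p T x) = 0" by (rule assms(1))
  finally show ?case by simp
qed

lemma norm_bound:
  assumes pos: "positive_op T" and b: "\<forall>u\<in>{0..onorm T}. \<bar>poly p u\<bar> < e"
  shows "norm (poly_op p T x) \<le> e * norm x"
proof -
  have bl: "bounded_linear T" by (rule pos_bl[OF pos])
  have M0: "0 \<le> onorm T" by (rule onorm_pos_le[OF bl])
  have b0: "\<bar>poly p 0\<bar> < e" using b M0 by simp
  have e0: "0 \<le> e" by (rule order_trans[OF abs_ge_zero less_imp_le[OF b0]])
  show ?thesis
  proof (cases "onorm T = 0")
    case True
    hence T0: "\<And>v. T v = 0" using onorm_eq_0[OF bl] by simp
    thus ?thesis using poly_op_zeroT[OF T0 bl] b0 by (simp add: mult_right_mono)
  next
    case False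
    hence M: "onorm T > 0" using M0 by linarith
    define P where "P = poly_op p T"
    define q where "q = [:e * e:] - p * p"
    have "\<forall>u\<in>{0..onorm T}. poly q u > 0"
    proof
      fix u assume u: "u \<in> {0..onorm T}"
      have "\<bar>poly p u\<bar> * \<bar>poly p u\<bar> < e * e"
        using b u by (intro mult_strict_mono) auto
      thus "poly q u > 0" by (simp add: q_def abs_mult_self_eq)
    qed
    hence "good (onorm T) q" by (rule factor_good[OF M])
    hence "0 \<le> Re (cinner x (poly_op q T x))" by (rule good_pos[OF pos order.refl])
    moreover have "poly_op q T x = (e * e) *\<^sub>R x - P (P x)"
      unfolding q_def poly_op_diff poly_op_const[OF bl] poly_op_mult[OF bl] P_def by (rule refl)
    moreover have "cinner x (P (P x)) = cinner (P x) (P x)"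
      unfolding P_def by (rule poly_op_selfadj[OF bl positive_selfadj[OF pos], symmetric])
    ultimately have "0 \<le> e * e * (norm x)\<^sup>2 - (norm (P x))\<^sup>2"
      by (simp add: cinner_diff_right cinner_scaleR_right cinner_self_real)
    hence "(norm (P x))\<^sup>2 \<le> (e * norm x)\<^sup>2" by (simp add: power_mult_distrib power2_eq_square mult_ac)
    thus ?thesis unfolding P_def by (rule power2_le_imp_le[OF _ mult_nonneg_nonneg[OF e0 norm_ge_zero]])
  qed
qed

definition unif :: "real \<Rightarrow> (nat \<Rightarrow> real poly) \<Rightarrow> (real \<Rightarrow> real) \<Rightarrow> bool" where
  "unif M p f \<longleftrightarrow> (\<forall>e>0. \<forall>\<^sub>F n in sequentially. \<forall>u\<in>{0..M}. \<bar>poly (p n) u - f u\<bar> < e)"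

lemma unif_cauchy_op:
  assumes pos: "positive_op T" and p: "unif (onorm T) p f" and q: "unif (onorm T) q f" and e: "e > 0"
  shows "\<exists>N. \<forall>m\<ge>N. \<forall>n\<ge>N. \<forall>x. norm (poly_op (p m) T x - poly_op (q n) T x) \<le> e * norm x"
proof -
  obtain N1 where N1: "\<And>m. m \<ge> N1 \<Longrightarrow> \<forall>u\<in>{0..onorm T}. \<bar>poly (p m) u - f u\<bar> < e / 2"
    using p e unfolding unif_def eventually_sequentially by (meson half_gt_zero)
  obtain N2 where N2: "\<And>m. m \<ge> N2 \<Longrightarrow> \<forall>u\<in>{0..onorm T}. \<bar>poly (q m) u - f u\<bar> < e / 2"
    using q e unfolding unif_def eventually_sequentially by (meson half_gt_zero)
  have "\<forall>m\<ge>max N1 N2. \<forall>n\<ge>max N1 N2. \<forall>x. norm (poly_op (p m) T x - poly_op (q n) T x) \<le> e * norm x"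
  proof (intro allI impI)
    fix m n x assume m: "m \<ge> max N1 N2" and n: "n \<ge> max N1 N2"
    have "\<forall>u\<in>{0..onorm T}. \<bar>poly (p m - q n) u\<bar> < e"
    proof
      fix u assume u: "u \<in> {0..onorm T}"
      have "\<bar>poly (p m) u - f u\<bar> < e / 2" "\<bar>poly (q n) u - f u\<bar> < e / 2"
        using N1[of m] N2[of n] m n u by auto
      thus "\<bar>poly (p m - q n) u\<bar> < e" unfolding poly_diff abs_less_iff by linarith
    qed
    from norm_bound[OF pos this, of x]
    show "norm (poly_op (p m) T x - poly_op (q n) T x) \<le> e * norm x" by (simp add: poly_op_diff)
  qed
  thus ?thesis by blast
qed




lemma limit_bound:
  assumes pos: "positive_op T" and P: "unif (onorm T) P f" and q: "unif (onorm T) q f"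
    and lim: "\<And>x. (\<lambda>n. poly_op (P n) T x) \<longlonglongrightarrow> S x" and e: "e > 0"
  shows "\<exists>N. \<forall>n\<ge>N. \<forall>x. norm (poly_op (q n) T x - S x) \<le> e * norm x"
proof -
  obtain N where N: "\<And>m n x. m \<ge> N \<Longrightarrow> n \<ge> N \<Longrightarrow> norm (poly_op (q n) T x - poly_op (P m) T x) \<le> e * norm x"
    using unif_cauchy_op[OF pos q P e] by blast
  have "\<forall>n\<ge>N. \<forall>x. norm (poly_op (q n) T x - S x) \<le> e * norm x"
  proof (intro allI impI)
    fix n x assume n: "n \<ge> N"
    have "(\<lambda>m. norm (poly_op (q n) T x - poly_op (P m) T x)) \<longlonglongrightarrow> norm (poly_op (q n) T x - S x)"
      by (intro tendsto_norm tendsto_diff tendsto_const lim)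
    thus "norm (poly_op (q n) T x - S x) \<le> e * norm x"
      by (rule LIMSEQ_le_const2) (use N n in blast)
  qed
  thus ?thesis by blast
qed

lemma fcalc_exists:
  assumes pos: "positive_op T" and P: "unif (onorm T) P f"
  shows "\<exists>S. bounded_clinear S \<and>
     (\<forall>q. unif (onorm T) q f \<longrightarrow> (\<forall>e>0. \<exists>N. \<forall>n\<ge>N. \<forall>x. norm (poly_op (q n) T x - S x) \<le> e * norm x))"
proof -
  have bcl: "bounded_clinear T" by (rule pos_bcl[OF pos])
  have bl: "bounded_linear T" by (rule pos_bl[OF pos])
  define K where "K n = poly_op (P n) T" for n
  have cauchy: "Cauchy (\<lambda>n. K n x)" for x
  proof (rule CauchyI)
    fix e :: real assume e: "e > 0"
    define e' where "e' = e / (norm x + 1)"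
    have nx: "norm x + 1 > 0" using norm_ge_zero[of x] by linarith
    have e': "e' > 0" unfolding e'_def using e by (auto intro!: divide_pos_pos add_nonneg_pos)
    obtain N where N: "\<And>m n. m \<ge> N \<Longrightarrow> n \<ge> N \<Longrightarrow> norm (K m x - K n x) \<le> e' * norm x"
      using unif_cauchy_op[OF pos P P e'] unfolding K_def by blast
    have "e' * norm x < e"
    proof -
      have "e' * norm x < e' * (norm x + 1)" using e' by simp
      also have "\<dots> = e" using nx by (simp add: e'_def)
      finally show ?thesis .
    qed
    thus "\<exists>M. \<forall>m\<ge>M. \<forall>n\<ge>M. norm (K m x - K n x) < e"
      using N by (meson order.strict_trans1)
  qed
  define S where "S x = lim (\<lambda>n. K n x)" for x
  have lim: "(\<lambda>n. K n x) \<longlonglongrightarrow> S x" for x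
    using cauchy[of x] unfolding S_def Cauchy_convergent_iff convergent_LIMSEQ_iff .
  have bound: "\<exists>N. \<forall>n\<ge>N. \<forall>x. norm (poly_op (q n) T x - S x) \<le> e * norm x"
    if "unif (onorm T) q f" "e > 0" for q e
    by (rule limit_bound[OF pos P that(1) lim[unfolded K_def] that(2)])
  have add: "S (x + y) = S x + S y" for x y
  proof -
    have "(\<lambda>n. K n (x + y)) \<longlonglongrightarrow> S x + S y"
      unfolding K_def using lim[of x] lim[of y]
      by (simp add: K_def bl_add[OF poly_op_bl[OF bl]] tendsto_add)
    thus ?thesis using lim[of "x + y"] LIMSEQ_unique by blast
  qed
  have scC: "S (scaleC c x) = scaleC c (S x)" for c x
  proof -
    have "(\<lambda>n. K n (scaleC c x)) \<longlonglongrightarrow> scaleC c (S x)"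
      using tendsto_scaleC[OF lim[of x], of c] by (simp add: K_def poly_op_scaleC[OF bcl])
    thus ?thesis using lim[of "scaleC c x"] LIMSEQ_unique by blast
  qed
  obtain N1 where N1: "\<And>x. norm (K N1 x - S x) \<le> 1 * norm x"
    using bound[OF P, of 1] unfolding K_def by auto
  have blS: "bounded_linear S"
  proof (rule bounded_linear_intro[where K="onorm (K N1) + 1"])
    show "S (x + y) = S x + S y" for x y by (rule add)
    show "S (r *\<^sub>R x) = r *\<^sub>R S x" for r x by (simp add: scaleR_scaleC scC)
    show "norm (S x) \<le> norm x * (onorm (K N1) + 1)" for x
    proof -
      have "norm (S x) \<le> norm (K N1 x) + norm (K N1 x - S x)" by (metis norm_triangle_sub norm_minus_commute)
      also have "\<dots> \<le> onorm (K N1) * norm x + 1 * norm x"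
        by (intro add_mono onorm N1) (simp add: K_def poly_op_bl[OF bl])
      finally show ?thesis by (simp add: algebra_simps)
    qed
  qed
  have "bounded_clinear S" using blS scC by (simp add: bounded_clinear_def)
  thus ?thesis using bound by blast
qed

lemma fcalc_char:
  fixes T :: "'a::chilbert \<Rightarrow> 'a"
  assumes pos: "positive_op T" and P: "unif (onorm T) P f"
  shows "bounded_clinear (fcalc T f) \<and>
     (\<forall>q. unif (onorm T) q f \<longrightarrow> (\<forall>x. (\<lambda>n. poly_op (q n) T x) \<longlonglongrightarrow> fcalc T f x))"
proof -
  have bl: "bounded_linear T" by (rule pos_bl[OF pos])
  obtain S where S: "bounded_clinear S"
    and Sb: "\<And>q e. unif (onorm T) q f \<Longrightarrow> e > 0 \<Longrightarrow> \<exists>N. \<forall>n\<ge>N. \<forall>x. norm (poly_op (q n) T x - S x) \<le> e * norm x"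
    using fcalc_exists[OF pos P] by blast
  have blS: "bounded_linear S" using S by (simp add: bounded_clinear_def)
  define Pr where "Pr = (\<lambda>S. bounded_clinear S \<and>
     (\<forall>p :: nat \<Rightarrow> real poly.
        (\<forall>e>0. \<forall>\<^sub>F n in sequentially. \<forall>u\<in>{0..onorm T}. \<bar>poly (p n) u - f u\<bar> < e)
        \<longrightarrow> ((\<lambda>n. onorm (\<lambda>x. poly_op (p n) T x - S x)) \<longlonglongrightarrow> 0)))"
  have onorm_conv: "(\<lambda>n. onorm (\<lambda>x. poly_op (q n) T x - S x)) \<longlonglongrightarrow> 0" if q: "unif (onorm T) q f" for q
  proof (rule LIMSEQ_I)
    fix r :: real assume r: "r > 0"
    obtain N where N: "\<And>n x. n \<ge> N \<Longrightarrow> norm (poly_op (q n) T x - S x) \<le> (r / 2) * norm x"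
      using Sb[OF q, of "r / 2"] r by auto
    have "norm (onorm (\<lambda>x. poly_op (q n) T x - S x) - 0) < r" if n: "n \<ge> N" for n
    proof -
      have b: "bounded_linear (\<lambda>x. poly_op (q n) T x - S x)"
        by (intro bounded_linear_sub poly_op_bl[OF bl] blS)
      have "onorm (\<lambda>x. poly_op (q n) T x - S x) \<le> r / 2"
        by (rule onorm_bound) (use r N[OF n] in auto)
      moreover have "0 \<le> onorm (\<lambda>x. poly_op (q n) T x - S x)" by (rule onorm_pos_le[OF b])
      ultimately show ?thesis using r by simp
    qed
    thus "\<exists>no. \<forall>n\<ge>no. norm (onorm (\<lambda>x. poly_op (q n) T x - S x) - 0) < r" by blast
  qed
  have PrS: "Pr S" unfolding Pr_def using S onorm_conv by (simp add: unif_def)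
  have uniq: "S' = S" if "Pr S'" for S'
  proof
    fix x :: 'a
    have S': "bounded_clinear S'" and c': "(\<lambda>n. onorm (\<lambda>x. poly_op (P n) T x - S' x)) \<longlonglongrightarrow> 0"
      using that P unfolding Pr_def unif_def by auto
    have blS': "bounded_linear S'" using S' by (simp add: bounded_clinear_def)
    have c: "(\<lambda>n. onorm (\<lambda>x. poly_op (P n) T x - S x)) \<longlonglongrightarrow> 0" by (rule onorm_conv[OF P])
    have "(\<lambda>n. (onorm (\<lambda>x. poly_op (P n) T x - S x) + onorm (\<lambda>x. poly_op (P n) T x - S' x)) * norm x)
           \<longlonglongrightarrow> (0 + 0) * norm x"
      by (intro tendsto_intros c c')
    moreover have "norm (S' x - S x) \<le> (onorm (\<lambda>x. poly_op (P n) T x - S x) + onorm (\<lambda>x. poly_op (P n) T x - S' x)) * norm x" for n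
    proof -
      have "norm (S' x - S x) \<le> norm (poly_op (P n) T x - S x) + norm (poly_op (P n) T x - S' x)"
        by (rule order_trans[OF _ norm_triangle_ineq4]) (simp add: algebra_simps)
      also have "\<dots> \<le> onorm (\<lambda>x. poly_op (P n) T x - S x) * norm x + onorm (\<lambda>x. poly_op (P n) T x - S' x) * norm x"
        by (intro add_mono onorm[of "\<lambda>x. poly_op (P n) T x - S x", simplified]
              onorm[of "\<lambda>x. poly_op (P n) T x - S' x", simplified]
              bounded_linear_sub poly_op_bl[OF bl] blS blS')
      finally show ?thesis by (simp add: algebra_simps)
    qed
    ultimately have "norm (S' x - S x) \<le> 0"
      by (intro LIMSEQ_le_const[where X="\<lambda>n. (onorm (\<lambda>x. poly_op (P n) T x - S x) + onorm (\<lambda>x. poly_op (P n) T x - S' x)) * norm x"]) auto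
    thus "S' x = S x" by simp
  qed
  have "fcalc T f = S"
    unfolding fcalc_def Pr_def[symmetric] by (rule the_equality) (auto intro: PrS uniq)
  moreover have "(\<lambda>n. poly_op (q n) T x) \<longlonglongrightarrow> S x" if q: "unif (onorm T) q f" for q x
  proof -
    have "(\<lambda>n. norm (poly_op (q n) T x - S x)) \<longlonglongrightarrow> 0"
    proof (rule LIMSEQ_I)
      fix r :: real assume r: "r > 0"
      define e where "e = r / (norm x + 1)"
      have nx: "norm x + 1 > 0" using norm_ge_zero[of x] by linarith
      have e: "e > 0" unfolding e_def using r by (auto intro!: divide_pos_pos add_nonneg_pos)
      obtain N where N: "\<And>n. n \<ge> N \<Longrightarrow> norm (poly_op (q n) T x - S x) \<le> e * norm x"
        using Sb[OF q e] by blast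
      have "e * norm x < r"
      proof -
        have "e * norm x < e * (norm x + 1)" using e by simp
        also have "\<dots> = r" using nx by (simp add: e_def)
        finally show ?thesis .
      qed
      thus "\<exists>no. \<forall>n\<ge>no. norm (norm (poly_op (q n) T x - S x) - 0) < r"
        using N by (metis norm_ge_zero real_norm_def diff_zero abs_of_nonneg order.strict_trans1)
    qed
    thus ?thesis using tendsto_norm_zero_iff LIM_zero_iff by blast
  qed
  ultimately show ?thesis using S by auto
qed




lemma weier:
  assumes "continuous_on {0..M} f"
  shows "\<exists>P. unif M P f"
proof -
  have "\<exists>p. \<forall>u\<in>{0..M}. \<bar>poly p u - f u\<bar> < inverse (real (Suc n))" for n
  proof -
    obtain g where g: "real_polynomial_function g" "\<And>x. x \<in> {0..M} \<Longrightarrow> \<bar>f x - g x\<bar> < inverse (real (Suc n))"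
      using Stone_Weierstrass_real_polynomial_function[OF compact_Icc assms, of "inverse (real (Suc n))"] by auto
    obtain a k where gk: "g = (\<lambda>x. \<Sum>i\<le>k. a i * x ^ i)"
      using g(1) real_polynomial_function_iff_sum by blast
    define p where "p = (\<Sum>i\<le>k. monom (a i) i)"
    have "poly p x = g x" for x by (simp add: p_def gk poly_sum poly_monom)
    thus ?thesis using g(2) by (metis abs_minus_commute)
  qed
  then obtain P where P: "\<And>n. \<forall>u\<in>{0..M}. \<bar>poly (P n) u - f u\<bar> < inverse (real (Suc n))"
    by metis
  have "unif M P f" unfolding unif_def
  proof (intro allI impI)
    fix e :: real assume e: "e > 0"
    obtain N where N: "inverse (real (Suc N)) < e" using reals_Archimedean[OF e] by blast
    have "\<forall>n\<ge>N. \<forall>u\<in>{0..M}. \<bar>poly (P n) u - f u\<bar> < e"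
    proof (intro allI impI ballI)
      fix n u assume n: "n \<ge> N" and u: "u \<in> {0..M}"
      have "inverse (real (Suc n)) \<le> inverse (real (Suc N))"
        using n by (intro le_imp_inverse_le) auto
      moreover have "\<bar>poly (P n) u - f u\<bar> < inverse (real (Suc n))" using P[of n] u by blast
      ultimately show "\<bar>poly (P n) u - f u\<bar> < e" using N by linarith
    qed
    thus "\<forall>\<^sub>F n in sequentially. \<forall>u\<in>{0..M}. \<bar>poly (P n) u - f u\<bar> < e"
      unfolding eventually_sequentially by blast
  qed
  thus ?thesis by blast
qed

lemma fc_lim:
  fixes T :: "'a::chilbert \<Rightarrow> 'a"
  assumes pos: "positive_op T" and f: "continuous_on {0..onorm T} f"
  shows "bounded_clinear (fcalc T f) \<and>
     (\<forall>q. unif (onorm T) q f \<longrightarrow> (\<forall>x. (\<lambda>n. poly_op (q n) T x) \<longlonglongrightarrow> fcalc T f x))"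
  using weier[OF f] fcalc_char[OF pos] by blast

lemma fc_selfadj:
  fixes T :: "'a::chilbert \<Rightarrow> 'a"
  assumes pos: "positive_op T" and f: "continuous_on {0..onorm T} f"
  shows "selfadj (fcalc T f)"
  unfolding selfadj_def
proof (intro allI)
  fix x y :: 'a
  obtain P where P: "unif (onorm T) P f" using weier[OF f] by blast
  have l: "\<And>x. (\<lambda>n. poly_op (P n) T x) \<longlonglongrightarrow> fcalc T f x" using fc_lim[OF pos f] P by blast
  have "(\<lambda>n. cinner (poly_op (P n) T x) y) \<longlonglongrightarrow> cinner (fcalc T f x) y"
    by (rule tendsto_cinner_left[OF l])
  moreover have "(\<lambda>n. cinner (poly_op (P n) T x) y) \<longlonglongrightarrow> cinner x (fcalc T f y)"
    unfolding poly_op_selfadj[OF pos_bl[OF pos] positive_selfadj[OF pos]]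
    by (rule tendsto_cinner_right[OF l])
  ultimately show "cinner (fcalc T f x) y = cinner x (fcalc T f y)" by (rule LIMSEQ_unique)
qed

lemma cont_bounded:
  assumes "continuous_on {0..M} (f :: real \<Rightarrow> real)"
  obtains B where "B \<ge> 0" "\<And>u. u \<in> {0..M} \<Longrightarrow> \<bar>f u\<bar> \<le> B"
proof -
  have "bounded (f ` {0..M})" by (rule compact_imp_bounded[OF compact_continuous_image[OF assms compact_Icc]])
  then obtain a where a: "\<forall>x\<in>f ` {0..M}. norm x \<le> a" unfolding bounded_iff by blast
  show ?thesis
  proof (rule that[of "max a 0"])
    show "0 \<le> max a 0" by simp
    fix u assume u: "u \<in> {0..M}"
    hence "\<bar>f u\<bar> \<le> a" using a by auto
    thus "\<bar>f u\<bar> \<le> max a 0" by linarith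
  qed
qed

lemma fc_mult:
  fixes T :: "'a::chilbert \<Rightarrow> 'a"
  assumes pos: "positive_op T" and f: "continuous_on {0..onorm T} f" and g: "continuous_on {0..onorm T} g"
  shows "\<exists>R. unif (onorm T) R (\<lambda>u. f u * g u) \<and>
           (\<forall>x. (\<lambda>n. poly_op (R n) T x) \<longlonglongrightarrow> fcalc T f (fcalc T g x))"
proof -
  define M where "M = onorm T"
  have bl: "bounded_linear T" by (rule pos_bl[OF pos])
  obtain P where P: "unif M P f" using weier[OF f] M_def by blast
  obtain Q where Q: "unif M Q g" using weier[OF g] M_def by blast
  obtain Bf where Bf: "Bf \<ge> 0" "\<And>u. u \<in> {0..M} \<Longrightarrow> \<bar>f u\<bar> \<le> Bf" using cont_bounded[OF f] M_def by blast
  obtain Bg where Bg: "Bg \<ge> 0" "\<And>u. u \<in> {0..M} \<Longrightarrow> \<bar>g u\<bar> \<le> Bg" using cont_bounded[OF g] M_def by blast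
  define B where "B = max Bf Bg + 1"
  have B: "B > 0" "Bf + 1 \<le> B" "Bg \<le> B" using Bf Bg by (auto simp: B_def)
  have Pb: "\<forall>\<^sub>F n in sequentially. \<forall>u\<in>{0..M}. \<bar>poly (P n) u\<bar> < B"
  proof -
    have "\<forall>\<^sub>F n in sequentially. \<forall>u\<in>{0..M}. \<bar>poly (P n) u - f u\<bar> < 1" using P unfolding unif_def by simp
    thus ?thesis
    proof (rule eventually_mono)
      fix n assume h: "\<forall>u\<in>{0..M}. \<bar>poly (P n) u - f u\<bar> < 1"
      show "\<forall>u\<in>{0..M}. \<bar>poly (P n) u\<bar> < B"
      proof
        fix u assume u: "u \<in> {0..M}"
        have "\<bar>poly (P n) u\<bar> \<le> \<bar>poly (P n) u - f u\<bar> + \<bar>f u\<bar>" by linarith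
        moreover have "\<bar>poly (P n) u - f u\<bar> < 1" using h u by blast
        ultimately show "\<bar>poly (P n) u\<bar> < B" using Bf(2)[OF u] B by linarith
      qed
    qed
  qed
  define R where "R n = P n * Q n" for n
  have unifR: "unif M R (\<lambda>u. f u * g u)" unfolding unif_def
  proof (intro allI impI)
    fix e :: real assume e: "e > 0"
    define e' where "e' = e / (2 * B)"
    have e': "e' > 0" using e B by (simp add: e'_def)
    have "\<forall>\<^sub>F n in sequentially. (\<forall>u\<in>{0..M}. \<bar>poly (P n) u\<bar> < B) \<and>
            (\<forall>u\<in>{0..M}. \<bar>poly (P n) u - f u\<bar> < e') \<and> (\<forall>u\<in>{0..M}. \<bar>poly (Q n) u - g u\<bar> < e')"
    proof -
      have "\<forall>\<^sub>F n in sequentially. \<forall>u\<in>{0..M}. \<bar>poly (P n) u - f u\<bar> < e'" using P e' unfolding unif_def by blast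
      moreover have "\<forall>\<^sub>F n in sequentially. \<forall>u\<in>{0..M}. \<bar>poly (Q n) u - g u\<bar> < e'" using Q e' unfolding unif_def by blast
      ultimately show ?thesis using Pb by (intro eventually_conj)
    qed
    thus "\<forall>\<^sub>F n in sequentially. \<forall>u\<in>{0..M}. \<bar>poly (R n) u - f u * g u\<bar> < e"
    proof (rule eventually_mono)
      fix n assume h: "(\<forall>u\<in>{0..M}. \<bar>poly (P n) u\<bar> < B) \<and>
            (\<forall>u\<in>{0..M}. \<bar>poly (P n) u - f u\<bar> < e') \<and> (\<forall>u\<in>{0..M}. \<bar>poly (Q n) u - g u\<bar> < e')"
      show "\<forall>u\<in>{0..M}. \<bar>poly (R n) u - f u * g u\<bar> < e"
      proof
        fix u assume u: "u \<in> {0..M}"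
        define a where "a = poly (P n) u"
        define b where "b = poly (Q n) u"
        have a: "\<bar>a\<bar> < B" "\<bar>a - f u\<bar> < e'" and b: "\<bar>b - g u\<bar> < e'"
          using h u by (auto simp: a_def b_def)
        have gu: "\<bar>g u\<bar> \<le> B" using Bg(2)[OF u] B by linarith
        have "a * b - f u * g u = a * (b - g u) + g u * (a - f u)" by (simp add: algebra_simps)
        hence "\<bar>a * b - f u * g u\<bar> \<le> \<bar>a\<bar> * \<bar>b - g u\<bar> + \<bar>g u\<bar> * \<bar>a - f u\<bar>"
          by (metis abs_mult abs_triangle_ineq)
        also have "\<dots> \<le> B * e' + B * e'"
          using a b gu by (intro add_mono mult_mono) auto
        also have "\<dots> = e" using B by (simp add: e'_def)
        finally have "\<bar>a * b - f u * g u\<bar> \<le> e" .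
        moreover have "\<bar>a\<bar> * \<bar>b - g u\<bar> < B * e'"
          using a b e' by (intro mult_strict_mono) auto
        ultimately show "\<bar>poly (R n) u - f u * g u\<bar> < e"
          using \<open>\<bar>a * b - f u * g u\<bar> \<le> \<bar>a\<bar> * \<bar>b - g u\<bar> + \<bar>g u\<bar> * \<bar>a - f u\<bar>\<close>
            mult_mono[OF gu less_imp_le[OF a(2)]] B e'
          by (simp add: R_def a_def b_def e'_def)
      qed
    qed
  qed
  have conv: "(\<lambda>n. poly_op (R n) T x) \<longlonglongrightarrow> fcalc T f (fcalc T g x)" for x
  proof -
    define G where "G = fcalc T g x"
    have lQ: "(\<lambda>n. poly_op (Q n) T x) \<longlonglongrightarrow> G" using fc_lim[OF pos g] Q by (simp add: M_def G_def)
    have lP: "(\<lambda>n. poly_op (P n) T G) \<longlonglongrightarrow> fcalc T f G" using fc_lim[OF pos f] P by (simp add: M_def)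
    have d: "poly_op (R n) T x = poly_op (P n) T (poly_op (Q n) T x - G) + poly_op (P n) T G" for n
      by (simp add: R_def poly_op_mult[OF bl] bl_diff[OF poly_op_bl[OF bl]])
    have z: "(\<lambda>n. poly_op (P n) T (poly_op (Q n) T x - G)) \<longlonglongrightarrow> 0"
    proof (rule Lim_null_comparison)
      show "\<forall>\<^sub>F n in sequentially. norm (poly_op (P n) T (poly_op (Q n) T x - G)) \<le> B * norm (poly_op (Q n) T x - G)"
        using Pb by (rule eventually_mono) (rule norm_bound[OF pos], simp add: M_def)
      have "(\<lambda>n. norm (poly_op (Q n) T x - G)) \<longlonglongrightarrow> 0"
        using tendsto_norm_zero[OF LIM_zero[OF lQ]] .
      hence "(\<lambda>n. B * norm (poly_op (Q n) T x - G)) \<longlonglongrightarrow> B * 0" by (intro tendsto_intros)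
      thus "(\<lambda>n. B * norm (poly_op (Q n) T x - G)) \<longlonglongrightarrow> 0" by simp
    qed
    have "(\<lambda>n. poly_op (P n) T (poly_op (Q n) T x - G) + poly_op (P n) T G) \<longlonglongrightarrow> 0 + fcalc T f G"
      by (rule tendsto_add[OF z lP])
    thus ?thesis unfolding d G_def by simp
  qed
  show ?thesis using unifR conv M_def by blast
qed




lemma cont_powr: "s > 0 \<Longrightarrow> continuous_on {0..M} (\<lambda>u::real. u powr s)"
  by (rule continuous_on_powr') (auto intro: continuous_intros)

lemma fcalc_one:
  fixes T :: "'a::chilbert \<Rightarrow> 'a"
  assumes pos: "positive_op T"
  shows "fcalc T (\<lambda>u. u powr 1) x = T x"
proof -
  have bl: "bounded_linear T" by (rule pos_bl[OF pos])
  have U: "unif (onorm T) (\<lambda>n. [:0, 1:]) (\<lambda>u. u powr 1)"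
    unfolding unif_def by (auto simp: powr_one)
  have "(\<lambda>n. poly_op [:0, 1:] T x) \<longlonglongrightarrow> fcalc T (\<lambda>u. u powr 1) x"
    using fc_lim[OF pos cont_powr[of 1]] U by auto
  hence "(\<lambda>n. T x) \<longlonglongrightarrow> fcalc T (\<lambda>u. u powr 1) x" by (simp add: poly_op_X[OF bl])
  thus ?thesis using LIMSEQ_unique tendsto_const by blast
qed

lemma op_pow_bcl:
  fixes T :: "'a::chilbert \<Rightarrow> 'a"
  assumes pos: "positive_op T" and s: "0 \<le> s"
  shows "bounded_clinear (op_pow T s) \<and> selfadj (op_pow T s)"
proof (cases "s = 0")
  case True
  have "bounded_clinear (id :: 'a \<Rightarrow> 'a)" by (simp add: bounded_clinear_def id_def)
  moreover have "selfadj (id :: 'a \<Rightarrow> 'a)" by (simp add: selfadj_def)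
  ultimately show ?thesis using True by (simp add: op_pow_def)
next
  case False
  hence sp: "s > 0" using s by simp
  show ?thesis using False fc_lim[OF pos cont_powr[OF sp]] fc_selfadj[OF pos cont_powr[OF sp]]
    by (simp add: op_pow_def)
qed

lemma op_pow_comp:
  fixes T :: "'a::chilbert \<Rightarrow> 'a"
  assumes pos: "positive_op T" and t: "0 \<le> t" "t \<le> 1"
  shows "op_pow T (1 - t) (op_pow T t x) = T x"
proof -
  consider "t = 0" | "t = 1" | "0 < t \<and> t < 1" using t by linarith
  then show ?thesis
  proof cases
    case 1 then show ?thesis by (simp add: op_pow_def fcalc_one[OF pos] del: powr_one')
  next
    case 2 then show ?thesis by (simp add: op_pow_def fcalc_one[OF pos] del: powr_one')
  next
    case 3
    have a: "1 - t > 0" and b: "t > 0" using 3 by auto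
    obtain R where R: "unif (onorm T) R (\<lambda>u. u powr (1 - t) * u powr t)"
      and c: "\<And>x. (\<lambda>n. poly_op (R n) T x) \<longlonglongrightarrow> fcalc T (\<lambda>u. u powr (1 - t)) (fcalc T (\<lambda>u. u powr t) x)"
      using fc_mult[OF pos cont_powr[OF a] cont_powr[OF b]] by blast
    have pw: "u powr (1 - t) * u powr t = u powr 1" for u :: real
      by (simp only: powr_add[symmetric]) simp
    have "unif (onorm T) R (\<lambda>u. u powr 1)" using R unfolding unif_def pw .
    hence "(\<lambda>n. poly_op (R n) T x) \<longlonglongrightarrow> fcalc T (\<lambda>u. u powr 1) x"
      using fc_lim[OF pos cont_powr[of 1]] by auto
    hence "fcalc T (\<lambda>u. u powr (1 - t)) (fcalc T (\<lambda>u. u powr t) x) = T x"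
      using c[of x] fcalc_one[OF pos, of x] by (metis LIMSEQ_unique)
    then show ?thesis using 3 by (simp add: op_pow_def)
  qed
qed




theorem proposition2p3:
  fixes T :: "'a::chilbert \<Rightarrow> 'a" and x y :: 'a and t :: real
  assumes "positive_op T" and "0 \<le> t" and "t \<le> 1"
  shows "(norm (T x) * norm (T y) \<noteq> 0 \<longrightarrow>
            cmod (cinner (T x) y) \<le>
              (norm (op_pow T t x)
                 - (INF l::complex. (norm (op_pow T t x - scaleC l (op_pow T (1 - t) y)))\<^sup>2)
                   / (2 * norm (op_pow T t x)))
              * norm (op_pow T (1 - t) y))
       \<and> (norm (T x) * norm (T y) = 0 \<longrightarrow>
            cmod (cinner (T x) y) \<le> norm (op_pow T t x) * norm (op_pow T (1 - t) y))
       \<and> (norm (T x) * norm (T y) \<noteq> 0 \<longrightarrow>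
            cmod (cinner (T x) y) \<le>
              (norm (op_pow T (1/2) x)
                 - (INF l::complex. (norm (op_pow T (1/2) (x - scaleC l y)))\<^sup>2)
                   / (2 * norm (op_pow T (1/2) x)))
              * norm (op_pow T (1/2) y))
       \<and> (norm (T x) * norm (T y) = 0 \<longrightarrow>
            cmod (cinner (T x) y) \<le> norm (op_pow T (1/2) x) * norm (op_pow T (1/2) y))"
proof -
  have pos: "positive_op T" by fact
  define A where "A = op_pow T t"
  define B where "B = op_pow T (1 - t)"
  define H where "H = op_pow T (1/2)"
  have A: "bounded_clinear A" "selfadj A" using op_pow_bcl[OF pos assms(2)] by (auto simp: A_def)
  have B: "bounded_clinear B" "selfadj B" using op_pow_bcl[OF pos, of "1 - t"] assms(3) by (auto simp: B_def)
  have H: "bounded_clinear H" "selfadj H" using op_pow_bcl[OF pos, of "1/2"] by (auto simp: H_def)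
  have BA: "B (A x) = T x" unfolding A_def B_def by (rule op_pow_comp[OF pos assms(2,3)])
  have HH: "H (H x) = T x" unfolding H_def using op_pow_comp[OF pos, of "1/2" x] by simp
  have e1: "cinner (T x) y = cinner (A x) (B y)"
    using B(2) BA unfolding selfadj_def by metis
  have e2: "cinner (T x) y = cinner (H x) (H y)"
    using H(2) HH unfolding selfadj_def by metis
  have Hlin: "H (x - scaleC l y) = H x - scaleC l (H y)" for l
    using bl_diff[OF bcl_bl[OF H(1)]] bcl_scaleC[OF H(1)] by simp
  have c1: "cmod (cinner (T x) y) \<le>
              (norm (A x) - (INF l::complex. (norm (A x - scaleC l (B y)))\<^sup>2) / (2 * norm (A x))) * norm (B y)"
    unfolding e1 by (rule main_ineq)
  have c2: "cmod (cinner (T x) y) \<le> norm (A x) * norm (B y)"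
    unfolding e1 by (rule cauchy_schwarz)
  have c3: "cmod (cinner (T x) y) \<le>
              (norm (H x) - (INF l::complex. (norm (H (x - scaleC l y)))\<^sup>2) / (2 * norm (H x))) * norm (H y)"
    unfolding e2 Hlin by (rule main_ineq)
  have c4: "cmod (cinner (T x) y) \<le> norm (H x) * norm (H y)"
    unfolding e2 by (rule cauchy_schwarz)
  show ?thesis using c1 c2 c3 c4 unfolding A_def B_def H_def by blast
qed



end
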